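(* Let $\alpha:I\to\mathbb{E}^3$ ($I\subset\mathbb{R}$ an open interval) be a smooth space curve parametrized by arclength $s$ with curvature $\kappa\equiv 1$. Then the tangent indicatrix $T=\alpha'$ of $\alpha$ is a spherical helix if and only if $\det(\alpha^{(3)}(s),\alpha^{(4)}(s),\alpha^{(5)}(s))=0$ for all $s\in I$.
   Context: $\alpha^{(k)}$ denotes the $k$-th derivative of $\alpha$ with respect to arclength, and $\det(u,v,w)$ is the determinant of the $3\times 3$ matrix with columns $u,v,w$. $\{T,N,B\}$ is the Frenet frame of $\alpha$, with $T'=\kappa N$, $N'=-\kappa T+\tau B$, $B'=-\tau N$, where $\tau$ is the torsion. The tangent indicatrix is the curve $s\mapsto T(s)$ on the unit sphere; since $\kappa\equiv1$, $s$ is also an arclength parameter of $T$. A curve is a helix (curve of constant slope) if its unit tangent vector makes a constant angle with a fixed direction; a spherical helix is a helix lying on a sphere. *)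

theory Defs
  imports "HOL-Analysis.Analysis"
begin

fun nderiv :: "nat \<Rightarrow> (real \<Rightarrow> 'a::real_normed_vector) \<Rightarrow> real \<Rightarrow> 'a" where
  "nderiv 0 f = f"
| "nderiv (Suc k) f = (\<lambda>t. vector_derivative (nderiv k f) (at t))"

definition smooth_curve_on :: "real set \<Rightarrow> (real \<Rightarrow> 'a::real_normed_vector) \<Rightarrow> bool" where
  "smooth_curve_on I f \<longleftrightarrow> (\<forall>k. \<forall>t\<in>I. nderiv k f differentiable (at t))"

definition det3 :: "real^3 \<Rightarrow> real^3 \<Rightarrow> real^3 \<Rightarrow> real" where
  "det3 u v w = det (transpose (vector [u, v, w] :: real^3^3))"

definition vec_angle :: "real^3 \<Rightarrow> real^3 \<Rightarrow> real" where
  "vec_angle u v = arccos ((u \<bullet> v) / (norm u * norm v))"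

definition helix_on :: "real set \<Rightarrow> (real \<Rightarrow> real^3) \<Rightarrow> bool" where
  "helix_on I \<beta> \<longleftrightarrow>
     (\<forall>s\<in>I. vector_derivative \<beta> (at s) \<noteq> 0) \<and>
     (\<exists>u::real^3. u \<noteq> 0 \<and> (\<exists>\<theta>. \<forall>s\<in>I.
        vec_angle (vector_derivative \<beta> (at s) /\<^sub>R norm (vector_derivative \<beta> (at s))) u = \<theta>))"

definition on_sphere :: "real set \<Rightarrow> (real \<Rightarrow> real^3) \<Rightarrow> bool" where
  "on_sphere I \<beta> \<longleftrightarrow> (\<exists>c r. r > 0 \<and> (\<forall>s\<in>I. dist (\<beta> s) c = r))"

definition spherical_helix_on :: "real set \<Rightarrow> (real \<Rightarrow> real^3) \<Rightarrow> bool" where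
  "spherical_helix_on I \<beta> \<longleftrightarrow> helix_on I \<beta> \<and> on_sphere I \<beta>"

end

theory Submission
  imports Defs
begin

unbundle cross3_syntax

lemma inner_deriv:
  assumes "(f has_vector_derivative f') (at s)" "(g has_vector_derivative g') (at s)"
  shows "((\<lambda>s. f s \<bullet> g s) has_real_derivative (f s \<bullet> g' + f' \<bullet> g s)) (at s)"
  using bounded_bilinear.has_vector_derivative[OF bounded_bilinear_inner assms]
  by (simp add: has_real_derivative_iff_has_vector_derivative)

lemma const_deriv_zero:
  assumes "open I" "s \<in> I" "\<forall>t\<in>I. h t = c" "(h has_real_derivative h') (at s)"
  shows "h' = 0"
proof -
  have "((\<lambda>_. c) has_real_derivative h') (at s)"
    using has_field_derivative_transform_within_open[OF assms(4,1,2)] assms(3) by auto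
  then show ?thesis using DERIV_const DERIV_unique by blast
qed

lemma bounded_bilinear_cross3: "bounded_bilinear cross3"
  using bilinear_conv_bounded_bilinear bilinear_cross by blast

lemma cross_deriv:
  assumes "(f has_vector_derivative f') (at s)" "(g has_vector_derivative g') (at s)"
  shows "((\<lambda>s. f s \<times> g s) has_vector_derivative (f s \<times> g' + f' \<times> g s)) (at s)"
  using bounded_bilinear.has_vector_derivative[OF bounded_bilinear_cross3 assms] by simp

lemma triple_cross: "a \<times> (b \<times> c) = (a \<bullet> c) *\<^sub>R b - (a \<bullet> b) *\<^sub>R c" for a b c :: "real^3"
  using exhaust_3 by (force simp add: cross3_simps)

lemma scalar_triple: "(a \<times> b) \<bullet> c = a \<bullet> (b \<times> c)" for a b c :: "real^3"
  by (simp add: cross3_simps)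

lemma const_inner:
  assumes "open I" "s \<in> I" "\<forall>t\<in>I. f t \<bullet> g t = c"
    "(f has_vector_derivative f') (at s)" "(g has_vector_derivative g') (at s)"
  shows "f s \<bullet> g' + f' \<bullet> g s = 0"
  using const_deriv_zero[OF assms(1-3) inner_deriv[OF assms(4,5)]] .

lemma zero_deriv_const:
  assumes "convex I" "\<forall>s\<in>I. (h has_real_derivative 0) (at s)"
  shows "\<exists>c. \<forall>s\<in>I. h s = (c::real)"
  using has_field_derivative_zero_constant[OF assms(1)] assms(2)
  by (meson has_field_derivative_at_within)

lemma perp3_det:
  fixes u X Y Z :: "real^3"
  assumes "u \<noteq> 0" "u \<bullet> X = 0" "u \<bullet> Y = 0" "u \<bullet> Z = 0"
  shows "X \<bullet> (Y \<times> Z) = 0"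
proof -
  let ?w = "Y \<times> Z"
  have "u \<times> ?w = 0" using assms by (simp add: triple_cross)
  have e: "u \<times> (u \<times> ?w) = (u \<bullet> ?w) *\<^sub>R u - (u \<bullet> u) *\<^sub>R ?w" by (rule triple_cross)
  have "(u \<bullet> u) *\<^sub>R ?w = (u \<bullet> ?w) *\<^sub>R u"
    using e \<open>u \<times> ?w = 0\<close> by (metis cross_zero_right eq_iff_diff_eq_0)
  hence "(u \<bullet> u) * (X \<bullet> ?w) = (u \<bullet> ?w) * (X \<bullet> u)"
    by (metis inner_scaleR_right)
  moreover have "u \<bullet> u \<noteq> 0" using assms(1) by simp
  ultimately show ?thesis using assms(2) by (simp add: inner_commute)
qed

lemma det3_cross: "det3 u v w = u \<bullet> (v \<times> w)"
  by (simp add: det3_def det_transpose dot_cross_det)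

theorem theorem1:
  fixes \<alpha> :: "real \<Rightarrow> real^3" and I :: "real set"
  assumes "open I" and "is_interval I" and "I \<noteq> {}"
    and "smooth_curve_on I \<alpha>"
    and "\<forall>s\<in>I. norm (nderiv 1 \<alpha> s) = 1"
    and "\<forall>s\<in>I. norm (nderiv 2 \<alpha> s) = 1"
  shows "spherical_helix_on I (nderiv 1 \<alpha>) \<longleftrightarrow>
         (\<forall>s\<in>I. det3 (nderiv 3 \<alpha> s) (nderiv 4 \<alpha> s) (nderiv 5 \<alpha> s) = 0)"
proof -
  have der: "(nderiv k \<alpha> has_vector_derivative nderiv (Suc k) \<alpha> s) (at s)" if "s \<in> I" for k s
    using assms(4) that unfolding smooth_curve_on_def by (simp add: vector_derivative_works[symmetric])
  have e: "Suc 1 = 2" "Suc 2 = 3" "Suc 3 = 4" "Suc 4 = 5" by simp_all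
  define T where "T = nderiv 1 \<alpha>"
  define N where "N = nderiv 2 \<alpha>"
  define X where "X = nderiv 3 \<alpha>"
  define Y where "Y = nderiv 4 \<alpha>"
  define Z where "Z = nderiv 5 \<alpha>"
  have dT: "(T has_vector_derivative N s) (at s)" if "s \<in> I" for s
    using der[OF that, of 1] by (simp only: T_def N_def e)
  have dN: "(N has_vector_derivative X s) (at s)" if "s \<in> I" for s
    using der[OF that, of 2] by (simp only: X_def N_def e)
  have dX: "(X has_vector_derivative Y s) (at s)" if "s \<in> I" for s
    using der[OF that, of 3] by (simp only: X_def Y_def e)
  have dY: "(Y has_vector_derivative Z s) (at s)" if "s \<in> I" for s
    using der[OF that, of 4] by (simp only: Z_def Y_def e)
  have vdT: "vector_derivative T (at s) = N s" for s
    by (simp only: T_def N_def e(1)[symmetric] nderiv.simps)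
  have TT: "\<forall>t\<in>I. T t \<bullet> T t = 1" using assms(5) by (simp add: T_def norm_eq_1)
  have NN: "\<forall>t\<in>I. N t \<bullet> N t = 1" using assms(6) by (simp add: N_def norm_eq_1)
  have TN: "\<forall>t\<in>I. T t \<bullet> N t = 0"
    using const_inner[OF assms(1) _ TT dT dT] by (simp add: inner_commute)
  have NX: "\<forall>t\<in>I. N t \<bullet> X t = 0"
    using const_inner[OF assms(1) _ NN dN dN] by (simp add: inner_commute)
  have TX: "\<forall>t\<in>I. T t \<bullet> X t = -1"
    using const_inner[OF assms(1) _ TN dT dN] NN by (force simp: algebra_simps)
  have NY: "\<forall>t\<in>I. N t \<bullet> Y t = - (X t \<bullet> X t)"
    using const_inner[OF assms(1) _ NX dN dX] by (force simp: algebra_simps)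
  have TY: "\<forall>t\<in>I. T t \<bullet> Y t = 0"
    using const_inner[OF assms(1) _ TX dT dX] NX by (force simp: algebra_simps)
  have nz: "X t \<times> Y t \<noteq> 0" if "t \<in> I" for t
  proof
    assume h: "X t \<times> Y t = 0"
    have "T t \<times> (X t \<times> Y t) = Y t" using TX TY that by (simp add: triple_cross)
    hence "Y t = 0" using h by simp
    hence "X t = 0" using NY that by force
    thus False using TX that by force
  qed
  have helix: "spherical_helix_on I T \<longleftrightarrow> (\<exists>u. u \<noteq> 0 \<and> (\<exists>c. \<forall>s\<in>I. N s \<bullet> u = c))"
  proof
    assume "spherical_helix_on I T"
    then obtain u \<theta> where u: "u \<noteq> 0" and th: "\<forall>s\<in>I. vec_angle (N s /\<^sub>R norm (N s)) u = \<theta>"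
      unfolding spherical_helix_on_def helix_on_def vdT by blast
    obtain s0 where s0: "s0 \<in> I" using assms(3) by blast
    have nN: "norm (N s) = 1" if "s \<in> I" for s using assms(6) that by (simp add: N_def)
    have bnd: "\<bar>N s \<bullet> u / norm u\<bar> \<le> 1" if "s \<in> I" for s
      using Cauchy_Schwarz_ineq2[of "N s" u] nN[OF that] u by (simp add: divide_le_eq_1 abs_divide)
    have "N s \<bullet> u = N s0 \<bullet> u" if "s \<in> I" for s
    proof -
      have "arccos (N s \<bullet> u / norm u) = arccos (N s0 \<bullet> u / norm u)"
        using th that s0 nN by (simp add: vec_angle_def)
      hence "N s \<bullet> u / norm u = N s0 \<bullet> u / norm u" using arccos_eq_iff bnd that s0 by blast
      thus ?thesis using u by simp
    qed
    thus "\<exists>u. u \<noteq> 0 \<and> (\<exists>c. \<forall>s\<in>I. N s \<bullet> u = c)" using u by blast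
  next
    assume "\<exists>u. u \<noteq> 0 \<and> (\<exists>c. \<forall>s\<in>I. N s \<bullet> u = c)"
    then obtain u c where u: "u \<noteq> 0" and c: "\<forall>s\<in>I. N s \<bullet> u = c" by blast
    have nN: "norm (N s) = 1" if "s \<in> I" for s using assms(6) that by (simp add: N_def)
    have "helix_on I T"
      unfolding helix_on_def vdT
    proof (intro conjI)
      show "\<forall>s\<in>I. N s \<noteq> 0" using nN by force
      show "\<exists>u. u \<noteq> 0 \<and> (\<exists>\<theta>. \<forall>s\<in>I. vec_angle (N s /\<^sub>R norm (N s)) u = \<theta>)"
        using u c nN by (intro exI[of _ u] conjI exI[of _ "arccos (c / norm u)"]) (auto simp: vec_angle_def)
    qed
    moreover have "on_sphere I T"
      unfolding on_sphere_def using TT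
      by (intro exI[of _ 0] exI[of _ 1]) (simp add: dist_norm norm_eq_1)
    ultimately show "spherical_helix_on I T" by (simp add: spherical_helix_on_def)
  qed
  have "(\<exists>u. u \<noteq> 0 \<and> (\<exists>c. \<forall>s\<in>I. N s \<bullet> u = c)) \<longleftrightarrow> (\<forall>s\<in>I. det3 (X s) (Y s) (Z s) = 0)"
  proof
    assume "\<exists>u. u \<noteq> 0 \<and> (\<exists>c. \<forall>s\<in>I. N s \<bullet> u = c)"
    then obtain u c where u: "u \<noteq> 0" and c: "\<forall>s\<in>I. N s \<bullet> u = c" by blast
    have du: "((\<lambda>_. u) has_vector_derivative 0) (at s)" for s by simp
    have Xu: "\<forall>s\<in>I. X s \<bullet> u = 0" using const_inner[OF assms(1) _ c dN du] by simp
    have Yu: "\<forall>s\<in>I. Y s \<bullet> u = 0" using const_inner[OF assms(1) _ Xu dX du] by simp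
    have Zu: "\<forall>s\<in>I. Z s \<bullet> u = 0" using const_inner[OF assms(1) _ Yu dY du] by simp
    show "\<forall>s\<in>I. det3 (X s) (Y s) (Z s) = 0"
      using Xu Yu Zu u by (auto simp: det3_cross inner_commute intro!: perp3_det)
  next
    assume dz: "\<forall>s\<in>I. det3 (X s) (Y s) (Z s) = 0"
    define n where "n s = X s \<times> Y s" for s
    define n' where "n' s = X s \<times> Z s" for s
    have dn: "(n has_vector_derivative n' s) (at s)" if "s \<in> I" for s
      using cross_deriv[OF dX[OF that] dY[OF that]] by (simp add: n_def[abs_def] n'_def)
    have nX: "n s \<bullet> X s = 0" for s by (simp add: n_def dot_cross_self)
    have nZ: "n s \<bullet> Z s = 0" if "s \<in> I" for s
      using dz that by (simp add: n_def scalar_triple det3_cross)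
    have nn': "n s \<times> n' s = 0" if "s \<in> I" for s
      using nX[of s] nZ[OF that] by (simp add: n'_def triple_cross)
    define b where "b s = (n s \<bullet> n' s) / (n s \<bullet> n s)" for s
    have n'b: "n' s = b s *\<^sub>R n s" if "s \<in> I" for s
    proof -
      have e: "n s \<times> (n s \<times> n' s) = (n s \<bullet> n' s) *\<^sub>R n s - (n s \<bullet> n s) *\<^sub>R n' s"
        by (rule triple_cross)
      have "(n s \<bullet> n s) *\<^sub>R n' s = (n s \<bullet> n' s) *\<^sub>R n s"
        using e nn'[OF that] by (metis cross_zero_right eq_iff_diff_eq_0)
      moreover have "n s \<bullet> n s \<noteq> 0" using nz[OF that] by (simp add: n_def)
      ultimately have "n' s = inverse (n s \<bullet> n s) *\<^sub>R ((n s \<bullet> n' s) *\<^sub>R n s)"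
        by (metis (no_types, lifting) left_inverse scaleR_one scaleR_scaleR)
      thus ?thesis unfolding b_def by (simp add: divide_inverse mult.commute)
    qed
    have nn0: "n s \<noteq> 0" if "s \<in> I" for s using nz[OF that] by (simp add: n_def)
    have dnorm: "((\<lambda>s. norm (n s)) has_real_derivative (b s * norm (n s))) (at s)" if "s \<in> I" for s
    proof -
      have h: "((\<lambda>s. norm (n s)) has_derivative (\<lambda>h. (h *\<^sub>R n' s) \<bullet> sgn (n s))) (at s)"
        using has_derivative_compose[OF dn[OF that, unfolded has_vector_derivative_def]
            has_derivative_norm[OF nn0[OF that]]] by (simp add: o_def)
      have "(\<lambda>h. (h *\<^sub>R n' s) \<bullet> sgn (n s)) = (\<lambda>h. (b s * norm (n s)) * h)"
        using nn0[OF that]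
        by (auto simp: sgn_div_norm b_def power2_norm_eq_inner[symmetric] power2_eq_square inner_commute[of "n' s"] field_simps)
      with h show ?thesis unfolding has_field_derivative_def by simp
    qed
    define v where "v s = inverse (norm (n s)) *\<^sub>R n s" for s
    have dv: "(v has_vector_derivative 0) (at s within I)" if "s \<in> I" for s
    proof -
      have "(v has_vector_derivative (inverse (norm (n s)) *\<^sub>R n' s
          + (- (b s * norm (n s) * inverse (norm (n s) ^ Suc (Suc 0)))) *\<^sub>R n s)) (at s)"
        unfolding v_def
        by (rule has_vector_derivative_scaleR[OF DERIV_inverse_fun[OF dnorm[OF that]] dn[OF that]])
          (use nn0[OF that] in simp)
      moreover have "inverse (norm (n s)) *\<^sub>R n' s
          + (- (b s * norm (n s) * inverse (norm (n s) ^ Suc (Suc 0)))) *\<^sub>R n s = 0"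
        using nn0[OF that] n'b[OF that] by (simp add: power2_eq_square field_simps)
      ultimately show ?thesis by (simp add: has_vector_derivative_at_within)
    qed
    obtain u where u: "\<And>s. s \<in> I \<Longrightarrow> v s = u"
      using has_vector_derivative_zero_constant[OF is_interval_convex[OF assms(2)] dv] by blast
    obtain s0 where s0: "s0 \<in> I" using assms(3) by blast
    have "u \<noteq> 0" using u[OF s0] nn0[OF s0] by (auto simp: v_def)
    moreover have Xu: "X s \<bullet> u = 0" if "s \<in> I" for s
      using u[OF that, symmetric] nX[of s] by (simp add: v_def inner_commute)
    moreover have "\<exists>c. \<forall>s\<in>I. N s \<bullet> u = c"
    proof (rule zero_deriv_const[OF is_interval_convex[OF assms(2)]], intro ballI)
      fix s assume s: "s \<in> I"
      have du: "((\<lambda>_. u) has_vector_derivative 0) (at s)" by simp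
      show "((\<lambda>s. N s \<bullet> u) has_real_derivative 0) (at s)"
        using inner_deriv[OF dN[OF s] du] Xu[OF s] by simp
    qed
    ultimately show "\<exists>u. u \<noteq> 0 \<and> (\<exists>c. \<forall>s\<in>I. N s \<bullet> u = c)" by blast
  qed
  thus ?thesis using helix by (simp add: T_def X_def Y_def Z_def)
qed

end
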